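(* Let $M\in\mathcal{D}_2$. Then the set $E_M\coloneqq\{z\in M:\ \operatorname{card}(\operatorname{Tan}(M,z)\cap S^1)=1\}$ is discrete.
   Context: A function on an open convex set $C\subset\mathbb{R}^d$ is DC if it is the difference of two convex functions on $C$. $\mathcal{D}_2$ denotes the family consisting of $\varnothing$ together with all nonempty closed sets $A\subset\mathbb{R}^2$ whose distance function $d_A=\operatorname{dist}(\cdot,A)$ is DC on $\mathbb{R}^2$. $S^1$ is the unit circle in $\mathbb{R}^2$. The tangent cone $\operatorname{Tan}(A,a)$ consists of all $u$ such that $u=\lim_{i\to\infty}r_i(a_i-a)$ for some $r_i>0$ and $a_i\in A$ with $a_i\to a$. A set $D\subset\mathbb{R}^2$ is discrete if each point of $\mathbb{R}^2$ has a neighbourhood containing at most one point of $D$. *)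

theory Defs
  imports "HOL-Analysis.Analysis"
begin

definition DC_on :: "('a::real_vector) set \<Rightarrow> ('a \<Rightarrow> real) \<Rightarrow> bool" where
  "DC_on C f \<longleftrightarrow> (\<exists>g h. convex_on C g \<and> convex_on C h \<and> (\<forall>x\<in>C. f x = g x - h x))"

definition D2 :: "(real^2) set set" where
  "D2 = {A. A = {} \<or> (closed A \<and> DC_on UNIV (\<lambda>x. infdist x A))}"

definition Tan :: "('a::real_normed_vector) set \<Rightarrow> 'a \<Rightarrow> 'a set" where
  "Tan A a = {u. \<exists>r::nat \<Rightarrow> real. \<exists>s::nat \<Rightarrow> 'a.
      (\<forall>i. r i > 0 \<and> s i \<in> A) \<and> s \<longlonglongrightarrow> a \<and> (\<lambda>i. r i *\<^sub>R (s i - a)) \<longlonglongrightarrow> u}"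

definition discrete_set :: "('a::topological_space) set \<Rightarrow> bool" where
  "discrete_set D \<longleftrightarrow> (\<forall>x. \<exists>U. open U \<and> x \<in> U \<and> (\<forall>p\<in>U \<inter> D. \<forall>q\<in>U \<inter> D. p = q))"

end

theory Submission
  imports Defs
begin

lemma subgrad_exists:
  fixes h :: "'a::euclidean_space \<Rightarrow> real"
  assumes "convex_on UNIV h"
  shows "\<exists>q. \<forall>y. h y \<ge> h z + q \<bullet> (y - z)"
proof -
  define S where "S = epigraph UNIV h"
  have cS: "convex S" using assms by (simp add: S_def convex_epigraphI)
  have inS: "(z, h z) \<in> S" by (simp add: S_def mem_epigraph)
  have nri: "(z, h z) \<notin> rel_interior S"
  proof
    assume "(z, h z) \<in> rel_interior S"
    then obtain e where e: "e > 0" "ball (z, h z) e \<inter> affine hull S \<subseteq> S"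
      using mem_rel_interior_ball by blast
    have p1: "(z, h z + 1) \<in> affine hull S"
      by (rule hull_inc) (simp add: S_def mem_epigraph)
    have p0: "(z, h z) \<in> affine hull S" by (rule hull_inc) (rule inS)
    have "(1 + e/2) *\<^sub>R (z, h z) + (- e/2) *\<^sub>R (z, h z + 1) \<in> affine hull S"
    proof -
      have "\<forall>u v. u + v = 1 \<longrightarrow> u *\<^sub>R (z, h z) + v *\<^sub>R (z, h z + 1) \<in> affine hull S"
        using affine_affine_hull[of S] p0 p1 unfolding affine_def by blast
      from this[rule_format, of "1+e/2" "-e/2"] show ?thesis by simp
    qed
    moreover have "(1 + e/2) *\<^sub>R (z, h z) + (- e/2) *\<^sub>R (z, h z + 1) = (z, h z - e/2)"
      by (simp add: algebra_simps scaleR_add_left[symmetric])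
    ultimately have A: "(z, h z - e/2) \<in> affine hull S" by simp
    have "(z, h z - e/2) \<in> ball (z, h z) e"
      using e by (simp add: dist_Pair_Pair dist_real_def)
    with A e have "(z, h z - e/2) \<in> S" by blast
    then show False using e by (simp add: S_def mem_epigraph)
  qed
  obtain a where a: "a \<noteq> 0" "\<And>y. y \<in> closure S \<Longrightarrow> a \<bullet> (z, h z) \<le> a \<bullet> y"
    "\<And>y. y \<in> rel_interior S \<Longrightarrow> a \<bullet> (z, h z) < a \<bullet> y"
    by (rule supporting_hyperplane_relative_frontier[OF cS closure_subset[THEN subsetD, OF inS] nri]) blast
  obtain p \<alpha> where pa: "a = (p, \<alpha>)" by (cases a)
  have ineq: "p \<bullet> z + \<alpha> * h z \<le> p \<bullet> y + \<alpha> * t" if "h y \<le> t" for y t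
  proof -
    have "(y,t) \<in> S" using that by (simp add: S_def mem_epigraph)
    then have "(y,t) \<in> closure S" using closure_subset by blast
    from a(2)[OF this] show ?thesis by (simp add: pa)
  qed
  have "\<alpha> \<ge> 0" using ineq[of z "h z + 1"] by (simp add: algebra_simps)
  moreover have "\<alpha> \<noteq> 0"
  proof
    assume "\<alpha> = 0"
    then have "p \<noteq> 0" using a(1) pa by (simp add: zero_prod_def)
    have "p \<bullet> z \<le> p \<bullet> (z - p)" using ineq[of "z - p" "h (z - p)"] \<open>\<alpha> = 0\<close> by simp
    then show False using \<open>p \<noteq> 0\<close> by (simp add: inner_diff_right inner_gt_zero_iff[symmetric] not_le[symmetric])
  qed
  ultimately have apos: "\<alpha> > 0" by simp
  show ?thesis
  proof (intro exI allI)
    fix y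
    have "p \<bullet> z + \<alpha> * h z \<le> p \<bullet> y + \<alpha> * h y" using ineq by simp
    then have "\<alpha> * (h z + (- (1/\<alpha>) *\<^sub>R p) \<bullet> (y - z)) \<le> \<alpha> * h y"
      using apos by (simp add: algebra_simps inner_diff_right)
    then show "h y \<ge> h z + (- (1/\<alpha>) *\<^sub>R p) \<bullet> (y - z)"
      using apos by simp
  qed
qed

lemma tan_scale:
  assumes "w \<in> Tan A a" "c > 0"
  shows "c *\<^sub>R w \<in> Tan A a"
proof -
  obtain r s where rs: "\<forall>i. r i > 0 \<and> s i \<in> A" "s \<longlonglongrightarrow> a" "(\<lambda>i. r i *\<^sub>R (s i - a)) \<longlonglongrightarrow> w"
    using assms(1) unfolding Tan_def by blast
  have "(\<lambda>i. c *\<^sub>R (r i *\<^sub>R (s i - a))) \<longlonglongrightarrow> c *\<^sub>R w"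
    by (intro tendsto_scaleR tendsto_const rs(3))
  then have "(\<lambda>i. (c * r i) *\<^sub>R (s i - a)) \<longlonglongrightarrow> c *\<^sub>R w" by simp
  moreover have "\<forall>i. c * r i > 0 \<and> s i \<in> A" using rs(1) assms(2) by simp
  ultimately show ?thesis unfolding Tan_def mem_Collect_eq
    apply (intro exI[of _ "\<lambda>i. c * r i"] exI[of _ s])
    using rs(2) by simp
qed

lemma tan_ray:
  assumes "Tan A a \<inter> sphere 0 1 = {u}" "w \<in> Tan A a"
  shows "w = norm w *\<^sub>R u"
proof (cases "w = 0")
  case False
  then have "(1 / norm w) *\<^sub>R w \<in> Tan A a" using tan_scale[OF assms(2)] False by simp
  moreover have "(1 / norm w) *\<^sub>R w \<in> sphere 0 1" using False by simp
  ultimately have "(1 / norm w) *\<^sub>R w = u" using assms(1) by blast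
  then show ?thesis using False by auto
qed simp

lemma ineq_aux:
  fixes d u v :: "'a::real_inner"
  assumes "norm u = 1" "d \<bullet> d + d \<bullet> u \<le> 0" "s \<ge> 0"
  shows "d \<bullet> v \<le> norm (v - s *\<^sub>R u)"
proof -
  have du: "d \<bullet> u \<le> 0" using assms(2) by (smt (verit) inner_ge_zero)
  have "norm d ^ 2 \<le> norm d"
  proof -
    have "norm d ^ 2 = d \<bullet> d" by (simp add: power2_norm_eq_inner)
    also have "\<dots> \<le> - (d \<bullet> u)" using assms(2) by simp
    also have "\<dots> \<le> norm d * norm u" using norm_cauchy_schwarz[of "-d" u] by simp
    finally show ?thesis using assms(1) by simp
  qed
  then have nd: "norm d \<le> 1"
  proof (rule contrapos_pp)
    assume "\<not> norm d \<le> 1"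
    then have "norm d * 1 < norm d * norm d" by (intro mult_strict_left_mono) auto
    then show "\<not> norm d ^ 2 \<le> norm d" by (simp add: power2_eq_square)
  qed
  have "d \<bullet> v = d \<bullet> (v - s *\<^sub>R u) + s * (d \<bullet> u)" by (simp add: inner_diff_right)
  also have "\<dots> \<le> norm d * norm (v - s *\<^sub>R u) + 0"
    by (rule add_mono[OF norm_cauchy_schwarz mult_nonneg_nonpos[OF assms(3) du]])
  also have "\<dots> \<le> norm (v - s *\<^sub>R u)" using nd by (simp add: mult_left_le_one_le)
  finally show ?thesis .
qed

lemma infdist_lessE:
  assumes "infdist x M < r" "M \<noteq> {}"
  shows "\<exists>y\<in>M. dist x y < r"
  using assms cInf_lessD[of "(\<lambda>a. dist x a) ` M" r] by (auto simp: infdist_notempty)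

lemma key:
  fixes M :: "'a::euclidean_space set"
  assumes fgh: "\<forall>x. infdist x M = g x - h x" and cg: "convex_on UNIV g"
    and zM: "z \<in> M" and T: "Tan M z \<inter> sphere 0 1 = {u}"
    and q: "\<forall>y. h y \<ge> h z + q \<bullet> (y - z)"
    and d: "d \<bullet> d + d \<bullet> u \<le> 0"
  shows "g y \<ge> g z + (q + d) \<bullet> (y - z)"
proof -
  define v where "v = y - z"
  have nu: "norm u = 1" using T by auto
  define t where "t = (\<lambda>i::nat. inverse (real (Suc i)))"
  have tpos: "\<And>i. t i > 0" and tle: "\<And>i. t i \<le> 1" by (auto simp: t_def field_simps)
  have t0: "t \<longlonglongrightarrow> 0" unfolding t_def by (rule LIMSEQ_inverse_real_of_nat)
  have step: "\<exists>i. infdist (z + t i *\<^sub>R v) M \<ge> t i * (d \<bullet> v - \<eta>)" if eta: "\<eta> > 0" for \<eta>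
  proof (rule ccontr)
    assume "\<not> ?thesis"
    then have "\<forall>i. \<exists>y\<in>M. dist (z + t i *\<^sub>R v) y < t i * (d \<bullet> v - \<eta>)"
      using infdist_lessE zM by (metis empty_iff not_le)
    then obtain y where y: "\<And>i. y i \<in> M" "\<And>i. dist (z + t i *\<^sub>R v) (y i) < t i * (d \<bullet> v - \<eta>)"
      by metis
    define w where "w = (\<lambda>i. (1 / t i) *\<^sub>R (y i - z))"
    have yw: "y i = z + t i *\<^sub>R w i" for i using tpos[of i] by (simp add: w_def)
    have wb: "norm (v - w i) < d \<bullet> v - \<eta>" for i
    proof -
      have "dist (z + t i *\<^sub>R v) (y i) = t i * norm (v - w i)"
        by (simp add: yw dist_norm scaleR_diff_right[symmetric] tpos less_imp_le)
      then show ?thesis using y(2)[of i] tpos[of i] by simp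
    qed
    have "\<forall>i. w i \<in> cball v (d \<bullet> v)"
    proof
      fix i have "norm (v - w i) \<le> d \<bullet> v" using wb[of i] eta by linarith
      then show "w i \<in> cball v (d \<bullet> v)" by (simp add: dist_norm)
    qed
    then obtain l \<sigma> where l: "strict_mono \<sigma>" "(w \<circ> \<sigma>) \<longlonglongrightarrow> l"
      using compact_imp_seq_compact[OF compact_cball] unfolding seq_compact_def by metis
    have lT: "l \<in> Tan M z"
      unfolding Tan_def mem_Collect_eq
    proof (intro exI[of _ "\<lambda>i. 1 / t (\<sigma> i)"] exI[of _ "y \<circ> \<sigma>"] conjI allI)
      fix i show "0 < 1 / t (\<sigma> i)" using tpos by simp
      show "(y \<circ> \<sigma>) i \<in> M" using y by simp
    next
      have "(\<lambda>i. z + t (\<sigma> i) *\<^sub>R (w \<circ> \<sigma>) i) \<longlonglongrightarrow> z + 0 *\<^sub>R l"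
        by (intro tendsto_intros l LIMSEQ_subseq_LIMSEQ[OF t0 l(1), unfolded o_def])
      then show "(y \<circ> \<sigma>) \<longlonglongrightarrow> z" by (simp add: yw o_def)
    next
      have "(\<lambda>i. (1 / t (\<sigma> i)) *\<^sub>R ((y \<circ> \<sigma>) i - z)) = w \<circ> \<sigma>"
        by (auto simp: w_def)
      then show "(\<lambda>i. (1 / t (\<sigma> i)) *\<^sub>R ((y \<circ> \<sigma>) i - z)) \<longlonglongrightarrow> l" using l(2) by simp
    qed
    have "(\<lambda>i. norm (v - (w \<circ> \<sigma>) i)) \<longlonglongrightarrow> norm (v - l)"
      by (intro tendsto_intros l(2))
    then have "norm (v - l) \<le> d \<bullet> v - \<eta>"
      by (rule LIMSEQ_le_const2) (use wb less_imp_le in auto)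
    moreover have "d \<bullet> v \<le> norm (v - l)"
      using tan_ray[OF T lT] ineq_aux[OF nu d, of "norm l" v] by simp
    ultimately show False using eta by simp
  qed
  have gz: "g z = h z" using fgh zM by (metis infdist_zero eq_iff_diff_eq_0)
  have main: "g (z + v) - g z \<ge> (q + d) \<bullet> v - \<eta>" if eta: "\<eta> > 0" for \<eta>
  proof -
    obtain i where i: "infdist (z + t i *\<^sub>R v) M \<ge> t i * (d \<bullet> v - \<eta>)" using step eta by blast
    let ?t = "t i"
    have "g ((1 - ?t) *\<^sub>R z + ?t *\<^sub>R (z + v)) \<le> (1 - ?t) * g z + ?t * g (z + v)"
      using convex_onD[OF cg, of ?t z "z + v"] tpos[of i] tle[of i] by simp
    moreover have "(1 - ?t) *\<^sub>R z + ?t *\<^sub>R (z + v) = z + ?t *\<^sub>R v" by (simp add: algebra_simps)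
    ultimately have c1: "g (z + ?t *\<^sub>R v) \<le> (1 - ?t) * g z + ?t * g (z + v)" by simp
    have c2: "h (z + ?t *\<^sub>R v) \<ge> h z + ?t * (q \<bullet> v)" using q[rule_format, of "z + ?t *\<^sub>R v"] by simp
    have c3: "g (z + ?t *\<^sub>R v) = infdist (z + ?t *\<^sub>R v) M + h (z + ?t *\<^sub>R v)" using fgh by simp
    have "?t * (g (z + v) - g z) \<ge> ?t * ((q + d) \<bullet> v - \<eta>)"
      using c1 c2 c3 i gz by (simp add: algebra_simps inner_add_left)
    then show ?thesis using tpos[of i] by simp
  qed
  have "(q + d) \<bullet> v \<le> g (z + v) - g z"
  proof (rule field_le_epsilon)
    fix e :: real assume "0 < e"
    from main[OF this] show "(q + d) \<bullet> v \<le> g (z + v) - g z + e" by linarith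
  qed
  then show ?thesis by (simp add: v_def)
qed

lemma half_diff:
  fixes x y :: "'a::real_vector"
  shows "x - (1/2) *\<^sub>R (x + y) = (1/2) *\<^sub>R (x - y)"
proof -
  have "x = (1/2) *\<^sub>R x + (1/2) *\<^sub>R x" by (simp flip: scaleR_add_left)
  then have "x - (1/2) *\<^sub>R (x + y) = (1/2) *\<^sub>R x + (1/2) *\<^sub>R x - (1/2) *\<^sub>R (x + y)" by simp
  also have "\<dots> = (1/2) *\<^sub>R (x - y)" by (simp add: algebra_simps)
  finally show ?thesis .
qed

lemma sep_lemma:
  fixes g :: "'a::euclidean_space \<Rightarrow> real"
  assumes A1: "\<forall>p\<in>cball c1 (1/2). \<forall>y. g y \<ge> g z1 + p \<bullet> (y - z1)"
    and A2: "\<forall>p\<in>cball c2 (1/2). \<forall>y. g y \<ge> g z2 + p \<bullet> (y - z2)"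
    and ne: "z1 \<noteq> z2"
  shows "dist c1 c2 \<ge> 1"
proof (rule ccontr)
  assume "\<not> ?thesis"
  then have lt: "dist c1 c2 < 1" by simp
  define w where "w = z2 - z1"
  have wn: "norm w > 0" using ne by (simp add: w_def)
  define e where "e = (1 / norm w) *\<^sub>R w"
  have ne1: "norm e = 1" using wn by (simp add: e_def)
  have ew: "e \<bullet> w = norm w" using wn by (simp add: e_def power2_norm_eq_inner[symmetric] power2_eq_square)
  define m where "m = (1/2) *\<^sub>R (c1 + c2)"
  define \<epsilon> where "\<epsilon> = (1 - dist c1 c2) / 2"
  have epos: "\<epsilon> > 0" using lt by (simp add: \<epsilon>_def)
  have "dist c1 (m + \<epsilon> *\<^sub>R e) \<le> 1/2"
  proof -
    have "c1 - (m + \<epsilon> *\<^sub>R e) = (1/2) *\<^sub>R (c1 - c2) - \<epsilon> *\<^sub>R e"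
      using half_diff[of c1 c2] by (simp add: m_def algebra_simps)
    then have "dist c1 (m + \<epsilon> *\<^sub>R e) = norm ((1/2) *\<^sub>R (c1 - c2) - \<epsilon> *\<^sub>R e)"
      by (simp only: dist_norm)
    also have "\<dots> \<le> norm ((1/2) *\<^sub>R (c1 - c2)) + norm (\<epsilon> *\<^sub>R e)"
      by (rule norm_triangle_ineq4)
    also have "\<dots> = dist c1 c2 / 2 + \<epsilon>" using ne1 epos by (simp add: dist_norm)
    also have "\<dots> = 1/2" unfolding \<epsilon>_def by (simp add: field_simps)
    finally show ?thesis .
  qed
  then have i1: "g z2 \<ge> g z1 + (m + \<epsilon> *\<^sub>R e) \<bullet> w" using A1 by (simp add: w_def)
  have "dist c2 (m - \<epsilon> *\<^sub>R e) \<le> 1/2"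
  proof -
    have "c2 - (m - \<epsilon> *\<^sub>R e) = (1/2) *\<^sub>R (c2 - c1) + \<epsilon> *\<^sub>R e"
      using half_diff[of c2 c1] by (simp add: m_def algebra_simps)
    then have "dist c2 (m - \<epsilon> *\<^sub>R e) = norm ((1/2) *\<^sub>R (c2 - c1) + \<epsilon> *\<^sub>R e)"
      by (simp only: dist_norm)
    also have "\<dots> \<le> norm ((1/2) *\<^sub>R (c2 - c1)) + norm (\<epsilon> *\<^sub>R e)"
      by (rule norm_triangle_ineq)
    also have "\<dots> = dist c1 c2 / 2 + \<epsilon>" using ne1 epos by (simp add: dist_norm norm_minus_commute)
    also have "\<dots> = 1/2" unfolding \<epsilon>_def by (simp add: field_simps)
    finally show ?thesis .
  qed
  then have i2: "g z1 \<ge> g z2 + (m - \<epsilon> *\<^sub>R e) \<bullet> (- w)" using A2 by (simp add: w_def)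
  have "(m + \<epsilon> *\<^sub>R e) \<bullet> w + (m - \<epsilon> *\<^sub>R e) \<bullet> (- w) = 2 * \<epsilon> * norm w"
    using ew by (simp add: algebra_simps inner_add_left inner_diff_left)
  moreover have "2 * \<epsilon> * norm w > 0" using epos wn by simp
  ultimately show False using i1 i2 by linarith
qed

lemma sub_bound:
  fixes g :: "'a::euclidean_space \<Rightarrow> real"
  assumes "convex_on UNIV g"
  shows "\<exists>B. \<forall>z\<in>ball x 1. \<forall>p. (\<forall>y. g y \<ge> g z + p \<bullet> (y - z)) \<longrightarrow> norm p \<le> B"
proof -
  have "continuous_on UNIV g" by (rule convex_on_continuous) (use assms in auto)
  then have "compact (g ` cball x 2)"
    by (rule compact_continuous_image[OF continuous_on_subset[OF _ subset_UNIV] compact_cball])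
  then have "bounded (g ` cball x 2)" by (rule compact_imp_bounded)
  then obtain K where K0': "\<forall>r\<in>g ` cball x 2. \<bar>r\<bar> \<le> K" unfolding bounded_real by blast
  have K: "\<forall>y\<in>cball x 2. \<bar>g y\<bar> \<le> K" using K0' by simp
  have K0: "K \<ge> 0" using K[rule_format, of x] by simp
  show ?thesis
  proof (intro exI[of _ "2 * K"] ballI allI impI)
    fix z p assume z: "z \<in> ball x 1" and sub: "\<forall>y. g y \<ge> g z + p \<bullet> (y - z)"
    show "norm p \<le> 2 * K"
    proof (cases "p = 0")
      case False
      define y where "y = z + (1 / norm p) *\<^sub>R p"
      have "dist x y \<le> dist x z + dist z y" by (rule dist_triangle)
      also have "dist z y = 1" using False by (simp add: y_def dist_norm)
      finally have "y \<in> cball x 2" using z by simp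
      moreover have "z \<in> cball x 2" using z by simp
      moreover have "g y \<ge> g z + norm p"
        using sub[rule_format, of y] False
        by (simp add: y_def power2_norm_eq_inner[symmetric] power2_eq_square)
      ultimately have "\<bar>g y\<bar> \<le> K" "\<bar>g z\<bar> \<le> K" "g z + norm p \<le> g y" using K by auto
      then show ?thesis by linarith
    qed (use K0 in simp)
  qed
qed

lemma finite_sep_bounded:
  fixes c :: "'a \<Rightarrow> 'b::euclidean_space"
  assumes sep: "\<forall>z1\<in>F. \<forall>z2\<in>F. z1 \<noteq> z2 \<longrightarrow> 1 \<le> dist (c z1) (c z2)"
    and bd: "\<forall>z\<in>F. norm (c z) \<le> B"
  shows "finite F"
proof (rule ccontr)
  assume inf: "infinite F"
  have inj: "inj_on c F"
  proof (rule inj_onI)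
    fix z1 z2 assume "z1 \<in> F" "z2 \<in> F" "c z1 = c z2"
    then show "z1 = z2" using sep by force
  qed
  then have infc: "infinite (c ` F)" using inf finite_imageD by blast
  have "bounded (c ` F)" unfolding bounded_iff using bd by blast
  then obtain l where "l islimpt (c ` F)"
    using bounded_infinite_imp_islimpt[OF subset_refl _ infc] by blast
  then have "infinite (c ` F \<inter> ball l (1/2))"
    by (simp add: islimpt_eq_infinite_ball)
  define S0 where "S0 = c ` F \<inter> ball l (1/2)"
  have inf2: "infinite S0" unfolding S0_def by fact
  obtain a where a: "a \<in> S0" using infinite_imp_nonempty[OF inf2] by blast
  have "infinite (S0 - {a})" using inf2 by simp
  then obtain b where b: "b \<in> S0 - {a}" using infinite_imp_nonempty by blast
  have ab: "a \<in> c ` F \<inter> ball l (1/2)" "b \<in> c ` F \<inter> ball l (1/2)" "a \<noteq> b"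
    using a b unfolding S0_def by auto
  then obtain z1 z2 where z: "z1 \<in> F" "z2 \<in> F" "a = c z1" "b = c z2" by blast
  have "z1 \<noteq> z2" using z(3,4) ab(3) by auto
  then have "1 \<le> dist (c z1) (c z2)" using sep z(1,2) by simp
  then have "dist a b \<ge> 1" using z(3,4) by simp
  moreover have "dist a b < 1"
    using dist_triangle_half_l[of a l 1 b] ab by (simp add: dist_commute)
  ultimately show False by simp
qed

theorem proposition5p9:
  fixes M :: "(real^2) set"
  assumes "M \<in> D2"
  shows "discrete_set {z \<in> M. card (Tan M z \<inter> sphere 0 1) = 1}"
proof -
  let ?E = "{z \<in> M. card (Tan M z \<inter> sphere 0 1) = 1}"
  consider "M = {}" | g h where "convex_on UNIV g" "convex_on UNIV h" "\<forall>x. infdist x M = g x - h x"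
    using assms unfolding D2_def DC_on_def by blast
  then show ?thesis
  proof cases
    case 1
    then show ?thesis unfolding discrete_set_def by (auto intro!: exI[of _ UNIV])
  next
    case 2
    note cg = 2(1) and ch = 2(2) and fgh = 2(3)
    have cex: "\<exists>c. \<forall>p\<in>cball c (1/2). \<forall>y. g y \<ge> g z + p \<bullet> (y - z)" if zE: "z \<in> ?E" for z
    proof -
      obtain u where u: "Tan M z \<inter> sphere 0 1 = {u}"
        using zE card_1_singletonE by force
      have nu: "norm u = 1" using u by auto
      obtain q where q: "\<forall>y. h y \<ge> h z + q \<bullet> (y - z)" using subgrad_exists[OF ch] by blast
      show ?thesis
      proof (intro exI[of _ "q - (1/2) *\<^sub>R u"] ballI allI)
        fix p y assume p: "p \<in> cball (q - (1/2) *\<^sub>R u) (1/2)"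
        define d where "d = p - q"
        have "norm (d + (1/2) *\<^sub>R u) \<le> 1/2"
          using p by (simp add: d_def dist_norm norm_minus_commute algebra_simps)
        then have "norm (d + (1/2) *\<^sub>R u) ^ 2 \<le> (1/2) ^ 2"
          by (intro power_mono) auto
        moreover have "norm (d + (1/2) *\<^sub>R u) ^ 2 = (d + (1/2) *\<^sub>R u) \<bullet> (d + (1/2) *\<^sub>R u)"
          by (rule power2_norm_eq_inner)
        ultimately have "(d + (1/2) *\<^sub>R u) \<bullet> (d + (1/2) *\<^sub>R u) \<le> (1/2) ^ 2" by linarith
        then have "(d + (1/2) *\<^sub>R u) \<bullet> (d + (1/2) *\<^sub>R u) \<le> 1/4" by (simp add: power2_eq_square)
        moreover have "u \<bullet> u = 1" using nu by (simp add: power2_norm_eq_inner[symmetric])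
        ultimately have dd: "d \<bullet> d + d \<bullet> u \<le> 0"
          by (simp add: inner_add_left inner_add_right inner_commute algebra_simps)
        have "g y \<ge> g z + (q + d) \<bullet> (y - z)"
          by (rule key[OF fgh cg _ u q dd]) (use zE in simp)
        then show "g y \<ge> g z + p \<bullet> (y - z)" by (simp add: d_def)
      qed
    qed
    define c where "c = (\<lambda>z. SOME c. \<forall>p\<in>cball c (1/2). \<forall>y. g y \<ge> g z + p \<bullet> (y - z))"
    have c: "\<And>z. z \<in> ?E \<Longrightarrow> \<forall>p\<in>cball (c z) (1/2). \<forall>y. g y \<ge> g z + p \<bullet> (y - z)"
      unfolding c_def by (rule someI_ex[OF cex])
    have sep: "dist (c z1) (c z2) \<ge> 1" if "z1 \<in> ?E" "z2 \<in> ?E" "z1 \<noteq> z2" for z1 z2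
      by (rule sep_lemma[OF c c]) (use that in auto)
    have fin: "finite (?E \<inter> ball x 1)" for x
    proof -
      obtain B where B: "\<forall>z\<in>ball x 1. \<forall>p. (\<forall>y. g y \<ge> g z + p \<bullet> (y - z)) \<longrightarrow> norm p \<le> B"
        using sub_bound[OF cg] by blast
      show ?thesis
      proof (rule finite_sep_bounded[where c = c and B = B])
        show "\<forall>z1\<in>?E \<inter> ball x 1. \<forall>z2\<in>?E \<inter> ball x 1. z1 \<noteq> z2 \<longrightarrow> 1 \<le> dist (c z1) (c z2)"
          using sep by blast
        show "\<forall>z\<in>?E \<inter> ball x 1. norm (c z) \<le> B"
        proof
          fix z assume z: "z \<in> ?E \<inter> ball x 1"
          then have "z \<in> ?E" "z \<in> ball x 1" by (simp_all only: Int_iff)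
          moreover have "c z \<in> cball (c z) (1/2)" by simp
          ultimately have "\<forall>y. g y \<ge> g z + c z \<bullet> (y - z)" using c by blast
          then show "norm (c z) \<le> B" using B \<open>z \<in> ball x 1\<close> by blast
        qed
      qed
    qed
    show ?thesis unfolding discrete_set_def
    proof
      fix x
      define F where "F = ?E \<inter> ball x 1"
      define U where "U = ball x 1 - (F - {x})"
      have finF: "finite F" using fin[of x] by (simp only: F_def)
      have oU: "open U" unfolding U_def
        by (intro open_Diff open_ball finite_imp_closed finite_Diff finF)
      have xU: "x \<in> U" unfolding U_def by simp
      have px: "p = x" if "p \<in> U \<inter> ?E" for p
      proof -
        have p1: "p \<in> ball x 1" "p \<notin> F - {x}" using that by (simp_all only: U_def Int_iff Diff_iff simp_thms)
        have p2: "p \<in> ?E" using that by (simp only: Int_iff)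
        have "p \<in> F" unfolding F_def using p1(1) p2 by (rule IntI[rotated])
        then show "p = x" using p1(2) by blast
      qed
      have "\<forall>p\<in>U \<inter> ?E. \<forall>q\<in>U \<inter> ?E. p = q"
      proof (intro ballI)
        fix p q assume hp: "p \<in> U \<inter> ?E" and hq: "q \<in> U \<inter> ?E"
        show "p = q" using px[OF hp] px[OF hq] by (rule trans[OF _ sym])
      qed
      then show "\<exists>U. open U \<and> x \<in> U \<and> (\<forall>p\<in>U \<inter> ?E. \<forall>q\<in>U \<inter> ?E. p = q)"
        using oU xU by (intro exI[of _ U] conjI)
    qed
  qed
qed

end
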